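(* Let $G$ be a planar graph that is a subgraph of some plane triangulation $T$ whose geometric dual $T^*$ admits a $2$-factor consisting of at most two cycles. Then $\chi_1(G) \le 2$.
   Context: All graphs are finite and simple. A mapping $f : V(G) \to E(G) \cup \{\emptyset\}$ is a $1$-selection of $G$ if for every $v \in V(G)$ either $f(v)$ is an edge incident with $v$ or $f(v) = \emptyset$. The graph $G_f$ is obtained from $G$ by deleting all edges in $f(V(G))$. The robust chromatic number is $\chi_1(G) = \min_f \chi(G_f)$ over all $1$-selections $f$ of $G$. A plane triangulation is a simple plane graph in which every face is bounded by a $3$-cycle. The geometric dual $T^*$ of a plane graph $T$ has a vertex for each face of $T$ and, for each edge $e$ of $T$, an edge joining the vertices corresponding to the two faces incident with $e$ (it may be a multigraph). A $2$-factor is a $2$-regular spanning subgraph. *)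

theory Defs
  imports Main
begin

definition simple_graph :: "'a set \<Rightarrow> 'a set set \<Rightarrow> bool" where
  "simple_graph V E \<longleftrightarrow> finite V \<and>
     (\<forall>e\<in>E. \<exists>u v. e = {u, v} \<and> u \<noteq> v \<and> u \<in> V \<and> v \<in> V)"

definition subgraph :: "'a set \<Rightarrow> 'a set set \<Rightarrow> 'a set \<Rightarrow> 'a set set \<Rightarrow> bool" where
  "subgraph VH EH V E \<longleftrightarrow> simple_graph VH EH \<and> VH \<subseteq> V \<and> EH \<subseteq> E"

definition colorable :: "'a set \<Rightarrow> 'a set set \<Rightarrow> nat \<Rightarrow> bool" where
  "colorable V E k \<longleftrightarrow> (\<exists>c :: 'a \<Rightarrow> nat. (\<forall>v\<in>V. c v < k) \<and>
      (\<forall>u v. {u, v} \<in> E \<longrightarrow> u \<noteq> v \<longrightarrow> c u \<noteq> c v))"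

definition chromatic_number :: "'a set \<Rightarrow> 'a set set \<Rightarrow> nat" where
  "chromatic_number V E = (LEAST k. colorable V E k)"

text \<open>1-selections: None plays the role of the empty selection.\<close>
definition one_selection :: "'a set \<Rightarrow> 'a set set \<Rightarrow> ('a \<Rightarrow> 'a set option) \<Rightarrow> bool" where
  "one_selection V E f \<longleftrightarrow>
     (\<forall>v\<in>V. f v = None \<or> (\<exists>e. f v = Some e \<and> e \<in> E \<and> v \<in> e))"

definition selected_removed :: "'a set \<Rightarrow> 'a set set \<Rightarrow> ('a \<Rightarrow> 'a set option) \<Rightarrow> 'a set set" where
  "selected_removed V E f = E - {e. \<exists>v\<in>V. f v = Some e}"

definition robust_chromatic_number :: "'a set \<Rightarrow> 'a set set \<Rightarrow> nat" where
  "robust_chromatic_number V E =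
     (LEAST k. \<exists>f. one_selection V E f \<and> chromatic_number V (selected_removed V E f) = k)"

text \<open>Plane triangulations, represented combinatorially as triangulated 2-spheres:
  a simple connected graph (V,E) with a finite set F of faces, each face f having as
  boundary bd f a triangle of the graph; every edge lies on exactly two faces; the link
  of every vertex is connected (hence a single cycle); and Euler's formula V - E + F = 2
  holds (so the surface is the sphere).\<close>
definition graph_connected :: "'a set \<Rightarrow> 'a set set \<Rightarrow> bool" where
  "graph_connected V E \<longleftrightarrow>
     (\<forall>u\<in>V. \<forall>w\<in>V. (u, w) \<in> {(x, y). {x, y} \<in> E}\<^sup>*)"

definition vertex_link_connected ::
    "'a set set \<Rightarrow> 'f set \<Rightarrow> ('f \<Rightarrow> 'a set) \<Rightarrow> 'a \<Rightarrow> bool" where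
  "vertex_link_connected E F bd v \<longleftrightarrow>
     (\<forall>w u. {v, w} \<in> E \<longrightarrow> {v, u} \<in> E \<longrightarrow>
        (w, u) \<in> {(x, y). \<exists>f\<in>F. bd f = {v, x, y}}\<^sup>*)"

definition plane_triangulation ::
    "'a set \<Rightarrow> 'a set set \<Rightarrow> 'f set \<Rightarrow> ('f \<Rightarrow> 'a set) \<Rightarrow> bool" where
  "plane_triangulation V E F bd \<longleftrightarrow>
     simple_graph V E \<and> card V \<ge> 3 \<and> graph_connected V E \<and> finite F \<and>
     (\<forall>f\<in>F. \<exists>a b c. bd f = {a, b, c} \<and> a \<noteq> b \<and> b \<noteq> c \<and> a \<noteq> c \<and>
                     {a, b} \<in> E \<and> {b, c} \<in> E \<and> {a, c} \<in> E) \<and>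
     (\<forall>e\<in>E. card {f\<in>F. e \<subseteq> bd f} = 2) \<and>
     (\<forall>v\<in>V. vertex_link_connected E F bd v) \<and>
     int (card V) - int (card E) + int (card F) = 2"

text \<open>Geometric dual: vertex set F; each edge e of T gives a dual edge joining the two
  faces whose boundary contains e. A spanning subgraph of T* is given by the set D \<subseteq> E of
  primal edges whose dual edges it uses. It is a 2-factor iff every face meets exactly two
  dual edges of D; its cycles are its connected components.\<close>
definition dual_two_factor ::
    "'a set set \<Rightarrow> 'f set \<Rightarrow> ('f \<Rightarrow> 'a set) \<Rightarrow> 'a set set \<Rightarrow> bool" where
  "dual_two_factor E F bd D \<longleftrightarrow> D \<subseteq> E \<and> (\<forall>f\<in>F. card {e\<in>D. e \<subseteq> bd f} = 2)"

definition dual_adj :: "'f set \<Rightarrow> ('f \<Rightarrow> 'a set) \<Rightarrow> 'a set set \<Rightarrow> ('f \<times> 'f) set" where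
  "dual_adj F bd D = {(f, g). f \<in> F \<and> g \<in> F \<and> f \<noteq> g \<and>
                       (\<exists>e\<in>D. e \<subseteq> bd f \<and> e \<subseteq> bd g)}"

definition num_dual_cycles :: "'f set \<Rightarrow> ('f \<Rightarrow> 'a set) \<Rightarrow> 'a set set \<Rightarrow> nat" where
  "num_dual_cycles F bd D = card (F // ((dual_adj F bd D)\<^sup>* \<inter> (F \<times> F)))"

end

theory Submission
  imports Defs
begin

definition sd :: "'x set \<Rightarrow> 'x set \<Rightarrow> 'x set" where
  "sd A B = (A - B) \<union> (B - A)"

lemma card_sd:
  assumes "finite A" "finite B"
  shows "card (sd A B) + 2 * card (A \<inter> B) = card A + card B"
proof -
  have "card (sd A B) = card (A - B) + card (B - A)"
    unfolding sd_def by (rule card_Un_disjoint) (use assms in auto)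
  moreover have "card (A - B) = card A - card (A \<inter> B)" by (simp add: assms card_Diff_subset_Int)
  moreover have "card (B - A) = card B - card (A \<inter> B)"
    by (metis Int_commute assms card_Diff_subset_Int finite_Int)
  moreover have "card (A \<inter> B) \<le> card A" "card (A \<inter> B) \<le> card B"
    by (simp_all add: assms card_mono)
  ultimately show ?thesis by linarith
qed

lemma odd_card_sd:
  assumes "finite A" "finite B"
  shows "odd (card {x \<in> sd A B. P x}) = (odd (card {x\<in>A. P x}) \<noteq> odd (card {x\<in>B. P x}))"
proof -
  have e: "{x \<in> sd A B. P x} = sd {x\<in>A. P x} {x\<in>B. P x}" unfolding sd_def by auto
  have "card (sd {x\<in>A. P x} {x\<in>B. P x}) + 2 * card ({x\<in>A. P x} \<inter> {x\<in>B. P x})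
        = card {x\<in>A. P x} + card {x\<in>B. P x}" by (rule card_sd) (use assms in auto)
  then show ?thesis unfolding e by presburger
qed

definition bnd :: "('x \<Rightarrow> 'y \<Rightarrow> bool) \<Rightarrow> 'y set \<Rightarrow> 'x set \<Rightarrow> 'y set" where
  "bnd R Y A = {y\<in>Y. odd (card {x\<in>A. R x y})}"

lemma bnd_sd:
  assumes "finite A" "finite B"
  shows "bnd R Y (sd A B) = sd (bnd R Y A) (bnd R Y B)"
  unfolding bnd_def using odd_card_sd[OF assms] by (auto simp: sd_def)

lemma sd_simps: "sd A {} = A" "sd {} A = A" "sd A A = {}" "sd (sd A B) B = A"
  unfolding sd_def by auto

lemma mem_sd: "x \<in> sd A B \<longleftrightarrow> (x \<in> A) \<noteq> (x \<in> B)"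
  unfolding sd_def by auto

lemma sd_comm: "sd A B = sd B A"
  unfolding sd_def by auto

lemma sd_sub: "A \<subseteq> X \<Longrightarrow> B \<subseteq> X \<Longrightarrow> sd A B \<subseteq> X" unfolding sd_def by auto

lemma rank_nullity:
  assumes fin: "finite X"
    and hom: "\<And>A B. A \<subseteq> X \<Longrightarrow> B \<subseteq> X \<Longrightarrow> \<phi> (sd A B) = sd (\<phi> A) (\<phi> B)"
  shows "card (Pow X) = card {A. A \<subseteq> X \<and> \<phi> A = {}} * card (\<phi> ` Pow X)"
proof -
  let ?K = "{A. A \<subseteq> X \<and> \<phi> A = {}}"
  let ?fib = "\<lambda>y. {A. A \<subseteq> X \<and> \<phi> A = y}"
  have un: "Pow X = (\<Union>y\<in>\<phi> ` Pow X. ?fib y)" by auto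
  have fc: "card (?fib y) = card ?K" if yin: "y \<in> \<phi> ` Pow X" for y
  proof -
    obtain A0 where A0: "A0 \<subseteq> X" "y = \<phi> A0" using yin by auto
    have "bij_betw (\<lambda>Z. sd Z A0) ?K (?fib y)"
    proof (rule bij_betw_byWitness[where f' = "\<lambda>Z. sd Z A0"])
      show "\<forall>a\<in>?K. sd (sd a A0) A0 = a" "\<forall>a\<in>?fib y. sd (sd a A0) A0 = a"
        by (simp_all add: sd_simps)
      show "(\<lambda>Z. sd Z A0) ` ?K \<subseteq> ?fib y"
      proof
        fix W assume "W \<in> (\<lambda>Z. sd Z A0) ` ?K"
        then obtain Z where Z: "Z \<subseteq> X" "\<phi> Z = {}" "W = sd Z A0" by auto
        have "\<phi> W = y" using Z A0 hom[of Z A0] by (simp add: sd_simps)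
        then show "W \<in> ?fib y" using Z A0 sd_sub[of Z X A0] by simp
      qed
      show "(\<lambda>Z. sd Z A0) ` ?fib y \<subseteq> ?K"
      proof
        fix W assume "W \<in> (\<lambda>Z. sd Z A0) ` ?fib y"
        then obtain Z where Z: "Z \<subseteq> X" "\<phi> Z = y" "W = sd Z A0" by auto
        have "\<phi> W = {}" using Z A0 hom[of Z A0] by (simp add: sd_simps)
        then show "W \<in> ?K" using Z A0 sd_sub[of Z X A0] by simp
      qed
    qed
    then show ?thesis by (simp add: bij_betw_same_card)
  qed
  have "card (Pow X) = (\<Sum>y\<in>\<phi> ` Pow X. card (?fib y))"
    by (subst un, rule card_UN_disjoint) (use fin in auto)
  also have "\<dots> = (\<Sum>y\<in>\<phi> ` Pow X. card ?K)" using fc by (rule sum.cong[OF refl])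
  finally show ?thesis by simp
qed

lemma card_even_subsets:
  assumes "finite W" "W \<noteq> {}"
  shows "card {A. A \<subseteq> W \<and> even (card A)} = 2 ^ (card W - 1)"
proof -
  obtain w where w: "w \<in> W" using assms by auto
  let ?E = "{A. A \<subseteq> W \<and> even (card A)}" and ?O = "{A. A \<subseteq> W \<and> odd (card A)}"
  have fA: "finite A" if "A \<subseteq> W" for A using assms(1) finite_subset that by blast
  have par: "odd (card (sd A {w})) = (\<not> odd (card A))" if "A \<subseteq> W" for A
    using odd_card_sd[of A "{w}" "\<lambda>_. True"] fA[OF that] by simp
  have "bij_betw (\<lambda>A. sd A {w}) ?E ?O"
  proof (rule bij_betw_byWitness[where f' = "\<lambda>A. sd A {w}"])
    show "\<forall>a\<in>?E. sd (sd a {w}) {w} = a" "\<forall>a\<in>?O. sd (sd a {w}) {w} = a" by (simp_all add: sd_simps)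
    show "(\<lambda>A. sd A {w}) ` ?E \<subseteq> ?O" using par w sd_sub[of _ W "{w}"] by auto
    show "(\<lambda>A. sd A {w}) ` ?O \<subseteq> ?E" using par w sd_sub[of _ W "{w}"] by auto
  qed
  then have c: "card ?E = card ?O" by (simp add: bij_betw_same_card)
  have "card (Pow W) = card ?E + card ?O"
  proof -
    have "Pow W = ?E \<union> ?O" by auto
    moreover have "card (?E \<union> ?O) = card ?E + card ?O"
      by (rule card_Un_disjoint) (use assms(1) in auto)
    ultimately show ?thesis by simp
  qed
  then have "2 * card ?E = 2 ^ card W" using c assms by (simp add: card_Pow)
  moreover have "2 ^ card W = (2::nat) * 2 ^ (card W - 1)"
  proof -
    have "card W > 0" using assms by (simp add: card_gt_0_iff)
    then have "card W = Suc (card W - 1)" by simp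
    then show ?thesis by (metis power_Suc)
  qed
  ultimately show ?thesis by simp
qed

definition twosets :: "'a set set \<Rightarrow> bool" where
  "twosets N \<longleftrightarrow> (\<forall>e\<in>N. \<exists>u v. e = {u, v} \<and> u \<noteq> v)"

definition kerN :: "'a set set \<Rightarrow> 'a set set set" where
  "kerN N = {X. X \<subseteq> N \<and> (\<forall>v. even (card {e\<in>X. v \<in> e}))}"

definition sel :: "'a set set \<Rightarrow> ('a \<Rightarrow> 'a set option) \<Rightarrow> bool" where
  "sel N f \<longleftrightarrow> (\<forall>v. f v = None \<or> (\<exists>e. f v = Some e \<and> e \<in> N \<and> v \<in> e)) \<and>
               (\<forall>e\<in>N. \<exists>v. f v = Some e)"

lemma twosets_card: "twosets N \<Longrightarrow> e \<in> N \<Longrightarrow> card e = 2"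
  unfolding twosets_def by auto

lemma twosets_subset: "twosets N \<Longrightarrow> M \<subseteq> N \<Longrightarrow> twosets M"
  unfolding twosets_def by auto

lemma twosets_finite: "twosets N \<Longrightarrow> e \<in> N \<Longrightarrow> finite e"
  unfolding twosets_def by auto

lemma handshake:
  assumes "finite X" "twosets X" "finite W" "\<Union>X \<subseteq> W"
  shows "even (card (bnd (\<lambda>e v. v \<in> e) W X))"
  using assms
proof (induction X rule: finite_induct)
  case empty
  then show ?case by (simp add: bnd_def)
next
  case (insert a X)
  have ins: "insert a X = sd X {a}" using insert.hyps by (auto simp: sd_def)
  have "{e\<in>{a}. v \<in> e} = (if v \<in> a then {a} else {})" for v by auto
  then have b1: "bnd (\<lambda>e v. v \<in> e) W {a} = a" using insert.prems unfolding bnd_def by auto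
  have "bnd (\<lambda>e v. v \<in> e) W (insert a X) = sd (bnd (\<lambda>e v. v \<in> e) W X) a"
    unfolding ins using bnd_sd[of X "{a}" "\<lambda>e v. v \<in> e" W] insert.hyps b1 by simp
  moreover have "even (card (bnd (\<lambda>e v. v \<in> e) W X))"
    using insert.IH insert.prems twosets_subset[of "insert a X" X] by blast
  moreover have "card a = 2" using insert.prems twosets_card by blast
  moreover have "finite a" using insert.prems twosets_finite by blast
  moreover have "finite (bnd (\<lambda>e v. v \<in> e) W X)" using insert.prems by (simp add: bnd_def)
  ultimately show ?case using card_sd[of "bnd (\<lambda>e v. v \<in> e) W X" a] by presburger
qed

lemma degree_sum:
  assumes "finite X" "twosets X" "finite W" "\<Union>X \<subseteq> W"
  shows "(\<Sum>v\<in>W. card {e\<in>X. v \<in> e}) = 2 * card X"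
  using assms
proof (induction X rule: finite_induct)
  case empty
  then show ?case by simp
next
  case (insert a X)
  have "(\<Sum>v\<in>W. card {e\<in>insert a X. v \<in> e}) = (\<Sum>v\<in>W. card {e\<in>X. v \<in> e} + (if v \<in> a then 1 else 0))"
  proof (rule sum.cong[OF refl])
    fix v assume "v \<in> W"
    show "card {e\<in>insert a X. v \<in> e} = card {e\<in>X. v \<in> e} + (if v \<in> a then 1 else 0)"
    proof (cases "v \<in> a")
      case True
      then have "{e\<in>insert a X. v \<in> e} = insert a {e\<in>X. v \<in> e}" by auto
      then show ?thesis using True insert.hyps by simp
    next
      case False
      then have "{e\<in>insert a X. v \<in> e} = {e\<in>X. v \<in> e}" by auto
      then show ?thesis using False by simp
    qed
  qed
  also have "\<dots> = (\<Sum>v\<in>W. card {e\<in>X. v \<in> e}) + (\<Sum>v\<in>W. (if v \<in> a then 1 else 0))"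
    by (simp add: sum.distrib)
  also have "(\<Sum>v\<in>W. (if v \<in> a then 1 else 0)) = card (W \<inter> a)"
    using insert.prems by (simp add: sum.If_cases)
  also have "W \<inter> a = a" using insert.prems by auto
  also have "card a = 2" using insert.prems twosets_card by blast
  also have "(\<Sum>v\<in>W. card {e\<in>X. v \<in> e}) = 2 * card X"
    using insert.IH insert.prems twosets_subset[of "insert a X" X] by blast
  finally show ?case using insert.hyps by simp
qed

lemma kerN_count:
  assumes fin: "finite N" and ts: "twosets N" and ne: "N \<noteq> {}"
  shows "2 ^ card N \<le> card (kerN N) * 2 ^ (card (\<Union>N) - 1)"
proof -
  let ?W = "\<Union>N"
  let ?phi = "bnd (\<lambda>e v. v \<in> e) ?W"
  have finW: "finite ?W" using fin ts twosets_finite by blast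
  have neW: "?W \<noteq> {}" using ne ts unfolding twosets_def by auto
  have hom: "?phi (sd A B) = sd (?phi A) (?phi B)" if "A \<subseteq> N" "B \<subseteq> N" for A B
  proof -
    have "finite A" "finite B" using that fin by (auto intro: finite_subset)
    then show ?thesis by (rule bnd_sd)
  qed
  have rn: "card (Pow N) = card {A. A \<subseteq> N \<and> ?phi A = {}} * card (?phi ` Pow N)"
    by (rule rank_nullity[OF fin hom])
  have K: "{A. A \<subseteq> N \<and> ?phi A = {}} = kerN N"
  proof -
    have "?phi A = {} \<longleftrightarrow> (\<forall>v. even (card {e\<in>A. v \<in> e}))" if "A \<subseteq> N" for A
    proof
      assume "?phi A = {}"
      show "\<forall>v. even (card {e\<in>A. v \<in> e})"
      proof
        fix v show "even (card {e\<in>A. v \<in> e})"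
        proof (cases "v \<in> ?W")
          case True then show ?thesis using \<open>?phi A = {}\<close> unfolding bnd_def by blast
        next
          case False then have e: "{e\<in>A. v \<in> e} = {}" using that by auto
          show ?thesis unfolding e by simp
        qed
      qed
    next
      assume "\<forall>v. even (card {e\<in>A. v \<in> e})"
      then show "?phi A = {}" unfolding bnd_def by auto
    qed
    then show ?thesis unfolding kerN_def by blast
  qed
  have img: "?phi ` Pow N \<subseteq> {A. A \<subseteq> ?W \<and> even (card A)}"
  proof
    fix B assume "B \<in> ?phi ` Pow N"
    then obtain A where A: "A \<subseteq> N" "B = ?phi A" by auto
    have "even (card B)" unfolding A(2)
    proof (rule handshake)
      show "finite A" using A fin finite_subset by blast
      show "twosets A" using A ts twosets_subset by blast
      show "finite ?W" by (rule finW)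
      show "\<Union>A \<subseteq> ?W" using A by blast
    qed
    moreover have "B \<subseteq> ?W" unfolding A(2) bnd_def by auto
    ultimately show "B \<in> {A. A \<subseteq> ?W \<and> even (card A)}" by simp
  qed
  have "card (?phi ` Pow N) \<le> card {A. A \<subseteq> ?W \<and> even (card A)}"
    by (rule card_mono[OF _ img]) (use finW in simp)
  also have "\<dots> = 2 ^ (card ?W - 1)" using card_even_subsets[OF finW neW] .
  finally have "card (Pow N) \<le> card (kerN N) * 2 ^ (card ?W - 1)"
    using rn K mult_le_mono2 by simp
  then show ?thesis using fin by (simp add: card_Pow)
qed

lemma kerN_mono: "M \<subseteq> N \<Longrightarrow> kerN M \<subseteq> kerN N"
  unfolding kerN_def by auto

lemma kerN_empty: "{} \<in> kerN N"
  unfolding kerN_def by simp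

lemma leaf_exists:
  assumes fin: "finite N" and ts: "twosets N" and ne: "N \<noteq> {}" and k: "kerN N = {{}}"
  shows "\<exists>v e. v \<noteq> r \<and> e \<in> N \<and> v \<in> e \<and> (\<forall>e'\<in>N. v \<in> e' \<longrightarrow> e' = e)"
proof (rule ccontr)
  assume nl: "\<not> ?thesis"
  let ?W = "\<Union>N"
  have finW: "finite ?W" using fin ts twosets_finite by blast
  have neW: "?W \<noteq> {}" using ne ts unfolding twosets_def by auto
  have deg: "2 \<le> card {e\<in>N. v \<in> e} + (if v = r then 1 else 0)" if v: "v \<in> ?W" for v
  proof -
    have f: "finite {e\<in>N. v \<in> e}" using fin by simp
    have "{e\<in>N. v \<in> e} \<noteq> {}" using v by auto
    then have c1: "card {e\<in>N. v \<in> e} \<ge> 1" using f by (simp add: Suc_le_eq card_gt_0_iff)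
    show ?thesis
    proof (cases "v = r")
      case True then show ?thesis using c1 by simp
    next
      case False
      have "card {e\<in>N. v \<in> e} \<noteq> 1"
      proof
        assume "card {e\<in>N. v \<in> e} = 1"
        then obtain e where e: "{e\<in>N. v \<in> e} = {e}" by (rule card_1_singletonE)
        then have "e \<in> N" "v \<in> e" "\<forall>e'\<in>N. v \<in> e' \<longrightarrow> e' = e" by auto
        then show False using nl False by blast
      qed
      then show ?thesis using c1 False by simp
    qed
  qed
  have "(\<Sum>v\<in>?W. 2) \<le> (\<Sum>v\<in>?W. card {e\<in>N. v \<in> e} + (if v = r then 1 else 0))"
    by (rule sum_mono) (rule deg)
  also have "\<dots> = (\<Sum>v\<in>?W. card {e\<in>N. v \<in> e}) + (\<Sum>v\<in>?W. (if v = r then 1 else 0))"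
    by (simp add: sum.distrib)
  also have "(\<Sum>v\<in>?W. card {e\<in>N. v \<in> e}) = 2 * card N"
    by (rule degree_sum[OF fin ts finW]) simp
  also have "(\<Sum>v\<in>?W. (if v = r then 1 else 0)) = card (?W \<inter> {r})"
    using finW by (simp add: sum.If_cases)
  also have "card (?W \<inter> {r}) \<le> 1" by (simp add: card_le_Suc0_iff_eq)
  finally have s: "2 * card ?W \<le> 2 * card N + 1" by simp
  have "2 ^ card N \<le> card (kerN N) * 2 ^ (card ?W - 1)" by (rule kerN_count[OF fin ts ne])
  then have "(2::nat) ^ card N \<le> 2 ^ (card ?W - 1)" using k by simp
  then have "card N \<le> card ?W - 1" by (rule power_le_imp_le_exp[rotated]) simp
  moreover have "card ?W \<ge> 1" using finW neW by (simp add: Suc_le_eq card_gt_0_iff)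
  ultimately show False using s by linarith
qed

lemma forest_sel:
  assumes "finite N" "twosets N" "kerN N = {{}}"
  shows "\<exists>f. sel N f \<and> f r = None"
  using assms
proof (induction N rule: finite_psubset_induct)
  case (psubset N)
  show ?case
  proof (cases "N = {}")
    case True
    then show ?thesis by (intro exI[of _ "\<lambda>_. None"]) (simp add: sel_def)
  next
    case False
    obtain v e where ve: "v \<noteq> r" "e \<in> N" "v \<in> e" "\<forall>e'\<in>N. v \<in> e' \<longrightarrow> e' = e"
      using leaf_exists[OF psubset.hyps(1) psubset.prems(1) False psubset.prems(2)] by blast
    let ?N = "N - {e}"
    have sub: "?N \<subset> N" using ve(2) by blast
    have ts: "twosets ?N" using twosets_subset[OF psubset.prems(1), of ?N] by blast
    have "kerN ?N \<subseteq> {{}}" using kerN_mono[of ?N N] psubset.prems(2) by simp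
    then have "kerN ?N = {{}}" using kerN_empty[of ?N] by blast
    then obtain f where f: "sel ?N f" "f r = None" using psubset.IH[OF sub ts] by blast
    have d: "f v = None \<or> (\<exists>e'. f v = Some e' \<and> e' \<in> ?N \<and> v \<in> e')"
      using f(1) unfolding sel_def by blast
    have nd: "\<not> (\<exists>e'. e' \<in> ?N \<and> v \<in> e')" using ve(4) by blast
    have fv: "f v = None" using d nd by blast
    let ?g = "f(v := Some e)"
    have "sel N ?g"
      unfolding sel_def
    proof (intro conjI ballI allI)
      fix w show "?g w = None \<or> (\<exists>e'. ?g w = Some e' \<and> e' \<in> N \<and> w \<in> e')"
      proof (cases "w = v")
        case True then show ?thesis using ve(2,3) by simp
      next
        case False
        then have "?g w = f w" by simp
        moreover have "f w = None \<or> (\<exists>e'. f w = Some e' \<and> e' \<in> ?N \<and> w \<in> e')"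
          using f(1) unfolding sel_def by blast
        ultimately show ?thesis by auto
      qed
    next
      fix e' assume e': "e' \<in> N"
      show "\<exists>w. ?g w = Some e'"
      proof (cases "e' = e")
        case True then show ?thesis by (intro exI[of _ v]) simp
      next
        case False
        then obtain w where "f w = Some e'" using f(1) e' unfolding sel_def by blast
        moreover then have "w \<noteq> v" using fv by (cases "w = v") simp_all
        ultimately show ?thesis by (intro exI[of _ w]) simp
      qed
    qed
    moreover have "?g r = None" using f(2) ve(1) by simp
    ultimately show ?thesis by blast
  qed
qed

lemma unicyclic_sel:
  assumes fin: "finite N" and ts: "twosets N" and k: "card (kerN N) \<le> 2"
  shows "\<exists>f. sel N f"
proof (cases "kerN N = {{}}")
  case True then show ?thesis using forest_sel[OF fin ts True] by blast
next
  case False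
  then obtain B where B: "B \<in> kerN N" "B \<noteq> {}" using kerN_empty[of N] by blast
  obtain e0 where e0: "e0 \<in> B" using B by auto
  have e0N: "e0 \<in> N" using B e0 unfolding kerN_def by auto
  then obtain a b where ab: "e0 = {a, b}" using ts unfolding twosets_def by blast
  let ?N = "N - {e0}"
  have finK: "finite (kerN N)" using fin unfolding kerN_def by simp
  have KN: "kerN N = {{}, B}"
  proof -
    have "{{}, B} \<subseteq> kerN N" using B kerN_empty by auto
    moreover have "card {{}, B} = 2" using B by simp
    ultimately show ?thesis using k finK card_seteq[of "kerN N" "{{}, B}"] by simp
  qed
  have "kerN ?N = {{}}"
  proof -
    have "kerN ?N \<subseteq> {{}, B}" using kerN_mono[of ?N N] KN by auto
    moreover have "B \<notin> kerN ?N" using e0 unfolding kerN_def by auto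
    ultimately show ?thesis using kerN_empty[of ?N] by auto
  qed
  moreover have "finite ?N" using fin by simp
  moreover have "twosets ?N" using ts twosets_subset[of N ?N] by blast
  ultimately obtain f where f: "sel ?N f" "f a = None"
    using forest_sel[of ?N a] by blast
  let ?g = "f(a := Some e0)"
  have "sel N ?g"
    unfolding sel_def
  proof (intro conjI ballI allI)
    fix w show "?g w = None \<or> (\<exists>e'. ?g w = Some e' \<and> e' \<in> N \<and> w \<in> e')"
      using f(1) e0N ab unfolding sel_def by auto
  next
    fix e' assume e': "e' \<in> N"
    show "\<exists>w. ?g w = Some e'"
    proof (cases "e' = e0")
      case True then show ?thesis by (intro exI[of _ a]) simp
    next
      case False
      then obtain w where "f w = Some e'" using f(1) e' unfolding sel_def by blast
      moreover then have "w \<noteq> a" using f(2) by (cases "w = a") simp_all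
      ultimately show ?thesis by (intro exI[of _ w]) simp
    qed
  qed
  then show ?thesis by blast
qed

abbreviation d1 :: "'a set \<Rightarrow> 'a set set \<Rightarrow> 'a set" where
  "d1 V X \<equiv> bnd (\<lambda>e v. v \<in> e) V X"

abbreviation d2 :: "'a set set \<Rightarrow> ('f \<Rightarrow> 'a set) \<Rightarrow> 'f set \<Rightarrow> 'a set set" where
  "d2 E bd S \<equiv> bnd (\<lambda>f e. e \<subseteq> bd f) E S"

locale PT =
  fixes V :: "'a set" and E :: "'a set set" and F :: "'f set" and bd :: "'f \<Rightarrow> 'a set"
  assumes pt: "plane_triangulation V E F bd"
begin

lemmas ptD = pt[unfolded plane_triangulation_def]
lemma sg: "simple_graph V E" using ptD by (elim conjE) assumption
lemma cardV: "card V \<ge> 3" using ptD by (elim conjE) assumption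
lemma conn: "graph_connected V E" using ptD by (elim conjE) assumption
lemma finF: "finite F" using ptD by (elim conjE) assumption
lemma triB: "\<forall>f\<in>F. \<exists>a b c. bd f = {a, b, c} \<and> a \<noteq> b \<and> b \<noteq> c \<and> a \<noteq> c \<and>
                     {a, b} \<in> E \<and> {b, c} \<in> E \<and> {a, c} \<in> E" using ptD by (elim conjE) assumption
lemma twoB: "\<forall>e\<in>E. card {f\<in>F. e \<subseteq> bd f} = 2" using ptD by (elim conjE) assumption
lemma linkB: "\<forall>v\<in>V. vertex_link_connected E F bd v" using ptD by (elim conjE) assumption
lemma euler: "int (card V) - int (card E) + int (card F) = 2" using ptD by (elim conjE) assumption
lemma tri: "f \<in> F \<Longrightarrow> \<exists>a b c. bd f = {a, b, c} \<and> a \<noteq> b \<and> b \<noteq> c \<and> a \<noteq> c \<and>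
                     {a, b} \<in> E \<and> {b, c} \<in> E \<and> {a, c} \<in> E"
  by (rule bspec[OF triB])
lemma two: "e \<in> E \<Longrightarrow> card {f\<in>F. e \<subseteq> bd f} = 2" by (rule bspec[OF twoB])
lemma link: "v \<in> V \<Longrightarrow> vertex_link_connected E F bd v" by (rule bspec[OF linkB])
lemmas sgD = sg[unfolded simple_graph_def]
lemma finV: "finite V" using sgD by (elim conjE) assumption
lemma Eform: "e \<in> E \<Longrightarrow> \<exists>u v. e = {u, v} \<and> u \<noteq> v \<and> u \<in> V \<and> v \<in> V"
  using sgD by (elim conjE) (erule bspec)
lemma ts: "twosets E" unfolding twosets_def using Eform by blast
lemma EV: "e \<in> E \<Longrightarrow> e \<subseteq> V" using Eform by blast
lemma finE: "finite E"
proof -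
  have "E \<subseteq> Pow V" using EV by blast
  then show ?thesis using finite_subset finV by blast
qed

lemma tri_pair: assumes "f \<in> F" "p \<in> bd f" "q \<in> bd f" "p \<noteq> q" shows "{p, q} \<in> E"
proof -
  obtain a b c where abc: "bd f = {a, b, c}" "{a, b} \<in> E" "{b, c} \<in> E" "{a, c} \<in> E"
    using tri[OF assms(1)] by blast
  have "p \<in> {a, b, c}" "q \<in> {a, b, c}" using assms(2,3) abc(1) by simp_all
  then have "{p, q} = {a, b} \<or> {p, q} = {b, c} \<or> {p, q} = {a, c}" using assms(4) by auto
  then show ?thesis using abc by auto
qed

lemma bdV: assumes "f \<in> F" shows "bd f \<subseteq> V"
proof -
  obtain a b c where "bd f = {a, b, c}" "{a, b} \<in> E" "{b, c} \<in> E"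
    using tri[OF assms(1)] by blast
  then show ?thesis using EV by blast
qed

lemma card_bd: assumes "f \<in> F" shows "card (bd f) = 3"
proof -
  obtain a b c where "bd f = {a, b, c}" "a \<noteq> b" "b \<noteq> c" "a \<noteq> c"
    using tri[OF assms(1)] by blast
  then show ?thesis by simp
qed

lemma d1_single: assumes "e \<in> E" shows "d1 V {e} = e"
proof -
  have "{x\<in>{e}. v \<in> x} = (if v \<in> e then {e} else {})" for v by auto
  then show ?thesis using EV[OF assms] unfolding bnd_def by auto
qed

lemma d1_sd: "X \<subseteq> E \<Longrightarrow> Y \<subseteq> E \<Longrightarrow> d1 V (sd X Y) = sd (d1 V X) (d1 V Y)"
  by (rule bnd_sd) (erule finite_subset[OF _ finE])+

lemma path_X:
  assumes "(u, w) \<in> {(x, y). {x, y} \<in> E}\<^sup>*"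
  shows "\<exists>X\<subseteq>E. d1 V X = sd {u} {w}"
  using assms
proof (induction rule: rtrancl_induct)
  case base
  show ?case by (intro exI[of _ "{}"]) (simp add: bnd_def sd_simps)
next
  case (step x y)
  then obtain X where X: "X \<subseteq> E" "d1 V X = sd {u} {x}" by blast
  have xy: "{x, y} \<in> E" using step.hyps(2) by simp
  have "x \<noteq> y" using Eform[OF xy] by auto
  have "d1 V (sd X {{x, y}}) = sd (sd {u} {x}) {x, y}"
    using d1_sd[of X "{{x, y}}"] X xy d1_single[OF xy] by simp
  also have "\<dots> = sd {u} {y}" using \<open>x \<noteq> y\<close> by (auto simp: mem_sd)
  finally show ?case using sd_sub[of X E "{{x,y}}"] X xy by blast
qed

lemma surj_d1:
  assumes "A \<subseteq> V" "even (card A)"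
  shows "\<exists>X\<subseteq>E. d1 V X = A"
  using assms
proof (induction "card A" arbitrary: A rule: less_induct)
  case less
  show ?case
  proof (cases "A = {}")
    case True then show ?thesis by (intro exI[of _ "{}"]) (simp add: bnd_def)
  next
    case False
    have finA: "finite A" using finite_subset[OF less.prems(1) finV] .
    obtain a where a: "a \<in> A" using False by blast
    have c1: "card (A - {a}) = card A - 1" using a finA by simp
    have c0: "card A > 0" using finA False by (simp add: card_gt_0_iff)
    have oA: "odd (card (A - {a}))" using less.prems(2) c1 c0 by simp
    then have "A - {a} \<noteq> {}" by (cases "A - {a} = {}") simp_all
    then obtain b where b: "b \<in> A" "b \<noteq> a" by blast
    let ?A = "A - {a, b}"
    have cA: "card ?A = card A - 2" using a b finA by (simp add: card_Diff_subset)
    have lt: "card ?A < card A" using cA c0 by simp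
    have eA: "even (card ?A)"
    proof -
      have "card A \<noteq> 1" using oA c1 by auto
      then have "card A \<ge> 2" using c0 by linarith
      then show ?thesis using cA less.prems(2) by simp
    qed
    have subA: "?A \<subseteq> V" using less.prems(1) by blast
    obtain X1 where X1: "X1 \<subseteq> E" "d1 V X1 = ?A"
      using less.hyps[OF lt subA eA] by blast
    have conn': "(a, b) \<in> {(x, y). {x, y} \<in> E}\<^sup>*"
      using conn less.prems(1) a b unfolding graph_connected_def by blast
    obtain X2 where X2: "X2 \<subseteq> E" "d1 V X2 = sd {a} {b}" using path_X[OF conn'] by blast
    have "d1 V (sd X1 X2) = sd ?A (sd {a} {b})" using d1_sd X1 X2 by simp
    also have "\<dots> = A" using a b by (auto simp: mem_sd)
    finally show ?thesis using sd_sub[OF X1(1) X2(1)] by blast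
  qed
qed

definition evens :: "'a set set set" where
  "evens = {X. X \<subseteq> E \<and> d1 V X = {}}"

lemma evens_count: "card evens * 2 ^ (card V - 1) = 2 ^ card E"
proof -
  have rn: "card (Pow E) = card evens * card (d1 V ` Pow E)"
    unfolding evens_def by (rule rank_nullity[OF finE]) (simp add: d1_sd)
  have "d1 V ` Pow E = {A. A \<subseteq> V \<and> even (card A)}"
  proof
    show "d1 V ` Pow E \<subseteq> {A. A \<subseteq> V \<and> even (card A)}"
    proof
      fix B assume "B \<in> d1 V ` Pow E"
      then obtain X where X: "X \<subseteq> E" "B = d1 V X" by auto
      have "even (card B)" unfolding X(2)
      proof (rule handshake)
        show "finite X" using finite_subset[OF X(1) finE] .
        show "twosets X" using twosets_subset[OF ts X(1)] .
        show "finite V" by (rule finV)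
        show "\<Union>X \<subseteq> V" using X EV by blast
      qed
      moreover have "B \<subseteq> V" unfolding X(2) bnd_def by auto
      ultimately show "B \<in> {A. A \<subseteq> V \<and> even (card A)}" by simp
    qed
    show "{A. A \<subseteq> V \<and> even (card A)} \<subseteq> d1 V ` Pow E"
      using surj_d1 by blast
  qed
  moreover have "V \<noteq> {}" using cardV by auto
  ultimately have "card (d1 V ` Pow E) = 2 ^ (card V - 1)" using card_even_subsets[OF finV] by simp
  then show ?thesis using rn finE by (simp add: card_Pow)
qed

end

context PT begin

lemma finS: "S \<subseteq> F \<Longrightarrow> finite S" using finite_subset finF by blast

lemma d2_sd: "S \<subseteq> F \<Longrightarrow> S' \<subseteq> F \<Longrightarrow> d2 E bd (sd S S') = sd (d2 E bd S) (d2 E bd S')"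
  by (rule bnd_sd) (erule finS)+

lemma d2_empty: "d2 E bd {} = {}" unfolding bnd_def by simp

lemma d2_F: "d2 E bd F = {}" unfolding bnd_def using two by simp

lemma d2_single: "d2 E bd {f} = {e\<in>E. e \<subseteq> bd f}"
proof -
  have "{g\<in>{f}. e \<subseteq> bd g} = (if e \<subseteq> bd f then {f} else {})" for e by auto
  then show ?thesis unfolding bnd_def by auto
qed

lemma face_edges:
  assumes "bd f = {a, b, c}" "a \<noteq> b" "b \<noteq> c" "a \<noteq> c" "{a, b} \<in> E" "{b, c} \<in> E" "{a, c} \<in> E"
  shows "{e\<in>E. e \<subseteq> bd f} = {{a, b}, {b, c}, {a, c}}"
proof
  show "{e\<in>E. e \<subseteq> bd f} \<subseteq> {{a, b}, {b, c}, {a, c}}"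
  proof
    fix e assume e: "e \<in> {e\<in>E. e \<subseteq> bd f}"
    then obtain u v where uv: "e = {u, v}" "u \<noteq> v" using Eform by blast
    have "u \<in> {a, b, c}" "v \<in> {a, b, c}" using e uv assms(1) by auto
    then show "e \<in> {{a, b}, {b, c}, {a, c}}" using uv by auto
  qed
  show "{{a, b}, {b, c}, {a, c}} \<subseteq> {e\<in>E. e \<subseteq> bd f}" using assms by auto
qed

lemma d1_face: assumes "f \<in> F" shows "d1 V (d2 E bd {f}) = {}"
proof -
  obtain a b c where abc: "bd f = {a, b, c}" "a \<noteq> b" "b \<noteq> c" "a \<noteq> c"
     "{a, b} \<in> E" "{b, c} \<in> E" "{a, c} \<in> E" using tri[OF assms] by blast
  have eq: "d2 E bd {f} = sd (sd {{a, b}} {{b, c}}) {{a, c}}"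
    unfolding d2_single face_edges[OF abc] using abc(2-4) by (auto simp: mem_sd doubleton_eq_iff)
  have "d1 V (d2 E bd {f}) = sd (sd {a, b} {b, c}) {a, c}"
    unfolding eq using abc(5-7) d1_sd d1_single by (simp add: sd_sub)
  also have "\<dots> = {}" using abc(2-4) by (auto simp: mem_sd)
  finally show ?thesis .
qed

lemma d2_in_evens: assumes "S \<subseteq> F" shows "d2 E bd S \<in> evens"
proof -
  have "finite S" using finS[OF assms] .
  then show ?thesis using assms
  proof (induction S rule: finite_induct)
    case empty
    then show ?case unfolding evens_def by (simp add: d2_empty bnd_def)
  next
    case (insert f S)
    have ins: "insert f S = sd S {f}" using insert.hyps by (auto simp: mem_sd)
    have fF: "f \<in> F" and SF: "S \<subseteq> F" using insert.prems by auto
    have ev: "d2 E bd S \<in> evens" using insert.IH[OF SF] .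
    have sub1: "d2 E bd S \<subseteq> E" and sub2: "d2 E bd {f} \<subseteq> E" unfolding bnd_def by auto
    have "d2 E bd (insert f S) = sd (d2 E bd S) (d2 E bd {f})"
      unfolding ins using d2_sd[OF SF] fF by simp
    moreover have "d1 V (sd (d2 E bd S) (d2 E bd {f})) = {}"
      using d1_sd[OF sub1 sub2] ev d1_face[OF fF] unfolding evens_def by (simp add: sd_simps)
    ultimately show ?case unfolding evens_def using sd_sub[OF sub1 sub2] by simp
  qed
qed

lemma closure_edge:
  assumes S: "S \<subseteq> F" and e: "e \<in> E" and ev: "even (card {h\<in>S. e \<subseteq> bd h})"
    and f: "f \<in> S" "e \<subseteq> bd f" and g: "g \<in> F" "e \<subseteq> bd g"
  shows "g \<in> S"
proof (rule ccontr)
  assume gS: "g \<notin> S"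
  have fin: "finite {h\<in>F. e \<subseteq> bd h}" using finF by simp
  have sub: "{h\<in>S. e \<subseteq> bd h} \<subset> {h\<in>F. e \<subseteq> bd h}" using S g gS by blast
  then have "card {h\<in>S. e \<subseteq> bd h} < 2" using psubset_card_mono[OF fin sub] two[OF e] by simp
  moreover have "card {h\<in>S. e \<subseteq> bd h} \<noteq> 0" using f finS[OF S] by auto
  ultimately have "card {h\<in>S. e \<subseteq> bd h} = 1" by linarith
  then show False using ev by simp
qed

end

context PT begin

lemma tri_at: assumes "f \<in> F" "v \<in> bd f"
  shows "\<exists>x y. bd f = {v, x, y} \<and> v \<noteq> x \<and> v \<noteq> y \<and> x \<noteq> y"
proof -
  obtain a b c where abc: "bd f = {a, b, c}" "a \<noteq> b" "b \<noteq> c" "a \<noteq> c"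
    using tri[OF assms(1)] by blast
  have "v = a \<or> v = b \<or> v = c" using assms(2) abc(1) by simp
  moreover have "{a, b, c} = {b, a, c}" "{a, b, c} = {c, a, b}" by auto
  ultimately show ?thesis using abc by metis
qed

lemma d2_zero: "d2 E bd S = {} \<Longrightarrow> e \<in> E \<Longrightarrow> even (card {h\<in>S. e \<subseteq> bd h})"
  unfolding bnd_def by blast

lemma vertex_step:
  assumes S: "S \<subseteq> F" and z: "d2 E bd S = {}" and f: "f \<in> S" "v \<in> bd f"
    and g: "g \<in> F" "v \<in> bd g"
  shows "g \<in> S"
proof -
  have fF: "f \<in> F" using f S by blast
  obtain x y where xy: "bd f = {v, x, y}" "v \<noteq> x" using tri_at[OF fF f(2)] by blast
  have vx: "{v, x} \<in> E" using tri_pair[OF fF] xy by simp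
  obtain c d where cd: "bd g = {v, c, d}" "v \<noteq> c" using tri_at[OF g] by blast
  have vc: "{v, c} \<in> E" using tri_pair[OF g(1)] cd by simp
  have vV: "v \<in> V" using bdV[OF fF] f(2) by blast
  have "(x, c) \<in> {(p, q). \<exists>h\<in>F. bd h = {v, p, q}}\<^sup>*"
    using link[OF vV] vx vc unfolding vertex_link_connected_def by blast
  then have "{v, c} \<in> E \<and> (\<forall>h\<in>F. {v, c} \<subseteq> bd h \<longrightarrow> h \<in> S)"
  proof (induction rule: rtrancl_induct)
    case base
    have "h \<in> S" if "h \<in> F" "{v, x} \<subseteq> bd h" for h
      by (rule closure_edge[OF S vx d2_zero[OF z vx] f(1) _ that]) (use xy in auto)
    then show ?case using vx by blast
  next
    case (step z z')
    then obtain h0 where h0: "h0 \<in> F" "bd h0 = {v, z, z'}" by blast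
    have h0S: "h0 \<in> S" using step.IH h0 by auto
    have "card {v, z, z'} = 3" using card_bd[OF h0(1)] h0(2) by simp
    then have "v \<noteq> z'"
    proof (intro notI)
      assume "card {v, z, z'} = 3" "v = z'"
      then have "card (insert z {z'}) = 3" by (simp add: insert_commute)
      moreover have "card (insert z {z'}) \<le> Suc (card {z'})" by (cases "z = z'") simp_all
      ultimately show False by simp
    qed
    then have vz': "{v, z'} \<in> E" using tri_pair[OF h0(1)] h0(2) by simp
    have "h \<in> S" if "h \<in> F" "{v, z'} \<subseteq> bd h" for h
      by (rule closure_edge[OF S vz' d2_zero[OF z vz'] h0S _ that]) (use h0 in auto)
    then show ?case using vz' by blast
  qed
  then show ?thesis using g cd by auto
qed

lemma dual_conn:
  assumes S: "S \<subseteq> F" and z: "d2 E bd S = {}" and ne: "S \<noteq> {}"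
  shows "S = F"
proof -
  obtain f0 where f0: "f0 \<in> S" using ne by blast
  have f0F: "f0 \<in> F" using f0 S by blast
  obtain v0 where v0: "v0 \<in> bd f0" using card_bd[OF f0F] by (cases "bd f0 = {}") auto
  have v0V: "v0 \<in> V" using bdV[OF f0F] v0 by blast
  have reach: "\<exists>f\<in>S. w \<in> bd f" if "w \<in> V" for w
  proof -
    have "(v0, w) \<in> {(x, y). {x, y} \<in> E}\<^sup>*" using conn v0V that unfolding graph_connected_def by blast
    then show ?thesis
    proof (induction rule: rtrancl_induct)
      case base then show ?case using f0 v0 by blast
    next
      case (step z z')
      then have zz: "{z, z'} \<in> E" by simp
      obtain f where f: "f \<in> S" "z \<in> bd f" using step.IH by blast
      have "card {h\<in>F. {z, z'} \<subseteq> bd h} > 0" using two[OF zz] by simp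
      then have "{h\<in>F. {z, z'} \<subseteq> bd h} \<noteq> {}" by (metis card.empty less_irrefl)
      then obtain g where g: "g \<in> F" "{z, z'} \<subseteq> bd g" by blast
      have "g \<in> S" by (rule vertex_step[OF S z f]) (use g in auto)
      then show ?case using g by blast
    qed
  qed
  have "g \<in> S" if g: "g \<in> F" for g
  proof -
    obtain v where v: "v \<in> bd g" using card_bd[OF g] by (cases "bd g = {}") auto
    then have "v \<in> V" using bdV[OF g] by blast
    then obtain f where "f \<in> S" "v \<in> bd f" using reach by blast
    then show ?thesis using vertex_step[OF S z] g v by blast
  qed
  then show ?thesis using S by blast
qed

lemma Fne: "F \<noteq> {}"
proof -
  have "card V > 1" using cardV by simp
  then have "\<not> (\<forall>a\<in>V. \<forall>b\<in>V. a = b)" using card_le_Suc0_iff_eq[OF finV] by simp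
  then obtain u w where uw: "u \<in> V" "w \<in> V" "u \<noteq> w" by blast
  have "(u, w) \<in> {(x, y). {x, y} \<in> E}\<^sup>*" using conn uw unfolding graph_connected_def by blast
  then obtain y where "(u, y) \<in> {(x, y). {x, y} \<in> E}" using uw(3)
    by (cases rule: converse_rtranclE) auto
  then have "{u, y} \<in> E" by simp
  then have "card {f\<in>F. {u, y} \<subseteq> bd f} = 2" by (rule two)
  then show ?thesis by (cases "F = {}") auto
qed

lemma img_count: "card (d2 E bd ` Pow F) * 2 = 2 ^ card F"
proof -
  have rn: "card (Pow F) = card {S. S \<subseteq> F \<and> d2 E bd S = {}} * card (d2 E bd ` Pow F)"
    by (rule rank_nullity[OF finF]) (simp add: d2_sd)
  have "{S. S \<subseteq> F \<and> d2 E bd S = {}} = {{}, F}"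
    using dual_conn d2_empty d2_F by blast
  moreover have "card {{}, F} = 2" using Fne by simp
  ultimately show ?thesis using rn finF by (simp add: card_Pow)
qed

lemma evens_eq: "evens = d2 E bd ` Pow F"
proof -
  have sub: "d2 E bd ` Pow F \<subseteq> evens" using d2_in_evens by blast
  have fin: "finite evens" unfolding evens_def using finE by simp
  have eu: "card V + card F = card E + 2" using euler by linarith
  have "card (d2 E bd ` Pow F) * 2 * 2 ^ (card V - 1) = 2 ^ card F * 2 ^ (card V - 1)"
    using img_count by simp
  also have "\<dots> = 2 ^ (card F + (card V - 1))" by (simp add: power_add)
  also have "card F + (card V - 1) = card E + 1" using eu cardV by linarith
  also have "(2::nat) ^ (card E + 1) = card evens * 2 ^ (card V - 1) * 2"
    using evens_count by simp
  finally have "card (d2 E bd ` Pow F) = card evens" by simp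
  then show ?thesis using card_seteq[OF fin sub] by simp
qed

end

context PT begin

lemma parity_face:
  assumes DE: "D \<subseteq> E" and DF: "\<forall>f\<in>F. card {e\<in>D. e \<subseteq> bd f} = 2" and S: "S \<subseteq> F"
  shows "even (card {e \<in> d2 E bd S. e \<in> D})"
proof -
  have "finite S" using finS[OF S] .
  then show ?thesis using S
  proof (induction S rule: finite_induct)
    case empty
    then show ?case by (simp add: d2_empty)
  next
    case (insert f S)
    have ins: "insert f S = sd S {f}" using insert.hyps by (auto simp: mem_sd)
    have fF: "f \<in> F" and SF: "S \<subseteq> F" using insert.prems by auto
    have sub1: "d2 E bd S \<subseteq> E" and sub2: "d2 E bd {f} \<subseteq> E" unfolding bnd_def by auto
    have fin1: "finite (d2 E bd S)" and fin2: "finite (d2 E bd {f})"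
      using finite_subset[OF sub1 finE] finite_subset[OF sub2 finE] by auto
    have eq: "d2 E bd (insert f S) = sd (d2 E bd S) (d2 E bd {f})"
      unfolding ins using d2_sd[OF SF] fF by simp
    have "{e \<in> d2 E bd {f}. e \<in> D} = {e\<in>D. e \<subseteq> bd f}" unfolding d2_single using DE by auto
    then have c2: "card {e \<in> d2 E bd {f}. e \<in> D} = 2" using DF fF by simp
    show ?case unfolding eq using odd_card_sd[OF fin1 fin2, of "\<lambda>e. e \<in> D"] insert.IH[OF SF] c2
      by simp
  qed
qed

definition Pth :: "'a \<Rightarrow> 'a \<Rightarrow> 'a set set" where
  "Pth r v = (SOME X. X \<subseteq> E \<and> d1 V X = sd {r} {v})"

lemma Pth: assumes "r \<in> V" "v \<in> V" shows "Pth r v \<subseteq> E \<and> d1 V (Pth r v) = sd {r} {v}"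
proof -
  have "(r, v) \<in> {(x, y). {x, y} \<in> E}\<^sup>*" using conn assms unfolding graph_connected_def by blast
  then have "\<exists>X. X \<subseteq> E \<and> d1 V X = sd {r} {v}" using path_X by blast
  then show ?thesis unfolding Pth_def by (rule someI_ex)
qed

lemma col_edge:
  assumes DE: "D \<subseteq> E" and DF: "\<forall>f\<in>F. card {e\<in>D. e \<subseteq> bd f} = 2"
    and r: "r \<in> V" and e: "{u, w} \<in> E"
  shows "odd (card {x\<in>Pth r w. x \<in> D}) = (odd (card {x\<in>Pth r u. x \<in> D}) \<noteq> ({u, w} \<in> D))"
proof -
  obtain a b where "{u, w} = {a, b}" "a \<noteq> b" "a \<in> V" "b \<in> V" using Eform[OF e] by blast
  then have uw: "u \<noteq> w" "u \<in> V" "w \<in> V" by (auto simp: doubleton_eq_iff)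
  have Pu: "Pth r u \<subseteq> E" "d1 V (Pth r u) = sd {r} {u}" using Pth[OF r uw(2)] by auto
  have Pw: "Pth r w \<subseteq> E" "d1 V (Pth r w) = sd {r} {w}" using Pth[OF r uw(3)] by auto
  let ?Y = "sd (Pth r u) {{u, w}}"
  have Ysub: "?Y \<subseteq> E" using sd_sub[OF Pu(1)] e by simp
  have "d1 V ?Y = sd (sd {r} {u}) {u, w}" using d1_sd[OF Pu(1)] e d1_single[OF e] Pu(2) by simp
  also have "\<dots> = sd {r} {w}" using uw(1) by (auto simp: mem_sd)
  finally have dY: "d1 V ?Y = sd {r} {w}" .
  let ?Z = "sd ?Y (Pth r w)"
  have "d1 V ?Z = {}" using d1_sd[OF Ysub Pw(1)] dY Pw(2) by (simp add: sd_simps)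
  then have "?Z \<in> evens" unfolding evens_def using sd_sub[OF Ysub Pw(1)] by simp
  then obtain S where S: "S \<subseteq> F" "?Z = d2 E bd S" using evens_eq by blast
  have evZ: "even (card {x\<in>?Z. x \<in> D})" using parity_face[OF DE DF S(1)] S(2) by simp
  have finPu: "finite (Pth r u)" using finite_subset[OF Pu(1) finE] .
  have finPw: "finite (Pth r w)" using finite_subset[OF Pw(1) finE] .
  have finY: "finite ?Y" using finite_subset[OF Ysub finE] .
  have z1: "odd (card {x\<in>?Z. x \<in> D}) = (odd (card {x\<in>?Y. x \<in> D}) \<noteq> odd (card {x\<in>Pth r w. x \<in> D}))"
    by (rule odd_card_sd[OF finY finPw])
  have z2: "odd (card {x\<in>?Y. x \<in> D}) = (odd (card {x\<in>Pth r u. x \<in> D}) \<noteq> odd (card {x\<in>{{u, w}}. x \<in> D}))"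
    by (rule odd_card_sd[OF finPu]) simp
  have "{x\<in>{{u, w}}. x \<in> D} = (if {u, w} \<in> D then {{u, w}} else {})" by auto
  then have z3: "odd (card {x\<in>{{u, w}}. x \<in> D}) = ({u, w} \<in> D)" by simp
  show ?thesis using evZ z1 z2 z3 by blast
qed

definition cl :: "'a set set \<Rightarrow> 'f set \<Rightarrow> bool" where
  "cl D Q \<longleftrightarrow> (\<forall>f g. (f, g) \<in> dual_adj F bd D \<longrightarrow> f \<in> Q \<longrightarrow> g \<in> Q)"

lemma cl_compl: "cl D Q \<Longrightarrow> cl D (F - Q)"
  unfolding cl_def dual_adj_def by blast

lemma cl_int: "cl D Q \<Longrightarrow> cl D Q' \<Longrightarrow> cl D (Q \<inter> Q')"
  unfolding cl_def by blast

lemma evens_cl: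
  assumes DE: "D \<subseteq> E" and X: "X \<in> evens" "X \<inter> D = {}"
  shows "\<exists>S. S \<subseteq> F \<and> cl D S \<and> X = d2 E bd S"
proof -
  obtain S where S: "S \<subseteq> F" "X = d2 E bd S" using X(1) evens_eq by blast
  have "cl D S" unfolding cl_def
  proof (intro allI impI)
    fix f g assume fg: "(f, g) \<in> dual_adj F bd D" and f: "f \<in> S"
    then obtain e where e: "e \<in> D" "e \<subseteq> bd f" "e \<subseteq> bd g" "g \<in> F"
      unfolding dual_adj_def by blast
    have eE: "e \<in> E" using e DE by blast
    have "e \<notin> X" using X(2) e by blast
    then have ev: "even (card {h\<in>S. e \<subseteq> bd h})" using S(2) eE unfolding bnd_def by blast
    show "g \<in> S" by (rule closure_edge[OF S(1) eE ev f e(2) e(4) e(3)])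
  qed
  then show ?thesis using S by blast
qed

lemma no_three:
  assumes nc: "num_dual_cycles F bd D \<le> 2"
    and A: "A \<subseteq> F" "cl D A" "A \<noteq> {}"
    and B: "B \<subseteq> F" "cl D B" "B \<noteq> {}"
    and C: "C \<subseteq> F" "cl D C" "C \<noteq> {}"
    and dj: "A \<inter> B = {}" "A \<inter> C = {}" "B \<inter> C = {}"
  shows False
proof -
  let ?R = "(dual_adj F bd D)\<^sup>* \<inter> (F \<times> F)"
  have cls: "?R `` {f} \<subseteq> Q" if "Q \<subseteq> F" "cl D Q" "f \<in> Q" for Q f
  proof
    fix g assume "g \<in> ?R `` {f}"
    then have "(f, g) \<in> (dual_adj F bd D)\<^sup>*" by blast
    then show "g \<in> Q"
    proof (induction rule: rtrancl_induct)
      case base then show ?case using that(3) .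
    next
      case (step y z) then show ?case using that(2) unfolding cl_def by blast
    qed
  qed
  have mem: "f \<in> ?R `` {f}" if "f \<in> F" for f using that by blast
  obtain a b c where abc: "a \<in> A" "b \<in> B" "c \<in> C" using A B C by blast
  have q: "?R `` {a} \<in> F // ?R" "?R `` {b} \<in> F // ?R" "?R `` {c} \<in> F // ?R"
    using abc A(1) B(1) C(1) by (auto intro: quotientI)
  have sa: "?R `` {a} \<subseteq> A" "a \<in> ?R `` {a}" using cls[OF A(1,2) abc(1)] mem abc(1) A(1) by auto
  have sb: "?R `` {b} \<subseteq> B" "b \<in> ?R `` {b}" using cls[OF B(1,2) abc(2)] mem abc(2) B(1) by auto
  have sc: "?R `` {c} \<subseteq> C" "c \<in> ?R `` {c}" using cls[OF C(1,2) abc(3)] mem abc(3) C(1) by auto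
  have d1: "?R `` {a} \<noteq> ?R `` {b}" using sa sb dj(1) by blast
  have d2: "?R `` {a} \<noteq> ?R `` {c}" using sa sc dj(2) by blast
  have d3: "?R `` {b} \<noteq> ?R `` {c}" using sb sc dj(3) by blast
  have fq: "finite (F // ?R)" by (rule finite_quotient[OF finF]) blast
  have "card {?R `` {a}, ?R `` {b}, ?R `` {c}} = 3" using d1 d2 d3 by simp
  moreover have "card {?R `` {a}, ?R `` {b}, ?R `` {c}} \<le> card (F // ?R)"
    by (rule card_mono[OF fq]) (use q in blast)
  ultimately show False using nc unfolding num_dual_cycles_def by simp
qed

lemma kerN_le2:
  assumes DE: "D \<subseteq> E" and nc: "num_dual_cycles F bd D \<le> 2" and N: "N \<subseteq> E - D"
  shows "card (kerN N) \<le> 2"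
proof -
  have inev: "X \<in> evens" "X \<inter> D = {}" if "X \<in> kerN N" for X
  proof -
    have X: "X \<subseteq> N" "\<forall>v. even (card {e\<in>X. v \<in> e})" using that unfolding kerN_def by auto
    then show "X \<in> evens" using N unfolding evens_def bnd_def by auto
    show "X \<inter> D = {}" using X N by blast
  qed
  have pair: "X = X'" if XX: "X \<in> kerN N" "X' \<in> kerN N" "X \<noteq> {}" "X' \<noteq> {}" for X X'
  proof -
    obtain S where S: "S \<subseteq> F" "cl D S" "X = d2 E bd S" using evens_cl[OF DE inev[OF XX(1)]] by blast
    obtain S' where S': "S' \<subseteq> F" "cl D S'" "X' = d2 E bd S'" using evens_cl[OF DE inev[OF XX(2)]] by blast
    have nS: "S \<noteq> {}" "S \<noteq> F" using S(3) XX(3) d2_empty d2_F by auto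
    have nS': "S' \<noteq> {}" "S' \<noteq> F" using S'(3) XX(4) d2_empty d2_F by auto
    define P1 where "P1 = S \<inter> S'"
    define P2 where "P2 = S \<inter> (F - S')"
    define P3 where "P3 = (F - S) \<inter> S'"
    define P4 where "P4 = (F - S) \<inter> (F - S')"
    have c: "cl D P1" "cl D P2" "cl D P3" "cl D P4"
      unfolding P1_def P2_def P3_def P4_def using S(2) S'(2) cl_int cl_compl by blast+
    have sb: "P1 \<subseteq> F" "P2 \<subseteq> F" "P3 \<subseteq> F" "P4 \<subseteq> F" unfolding P1_def P2_def P3_def P4_def using S(1) by auto
    have dj: "P1 \<inter> P2 = {}" "P1 \<inter> P3 = {}" "P1 \<inter> P4 = {}" "P2 \<inter> P3 = {}" "P2 \<inter> P4 = {}" "P3 \<inter> P4 = {}"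
      unfolding P1_def P2_def P3_def P4_def by auto
    have u: "P1 \<noteq> {} \<or> P2 \<noteq> {}" "P3 \<noteq> {} \<or> P4 \<noteq> {}" "P1 \<noteq> {} \<or> P3 \<noteq> {}" "P2 \<noteq> {} \<or> P4 \<noteq> {}"
      unfolding P1_def P2_def P3_def P4_def using nS nS' S(1) S'(1) by blast+
    have t: "\<not> (P1 \<noteq> {} \<and> P2 \<noteq> {} \<and> P3 \<noteq> {})" "\<not> (P1 \<noteq> {} \<and> P2 \<noteq> {} \<and> P4 \<noteq> {})"
            "\<not> (P1 \<noteq> {} \<and> P3 \<noteq> {} \<and> P4 \<noteq> {})" "\<not> (P2 \<noteq> {} \<and> P3 \<noteq> {} \<and> P4 \<noteq> {})"
      using no_three[OF nc sb(1) c(1) _ sb(2) c(2) _ sb(3) c(3) _ dj(1) dj(2) dj(4)]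
            no_three[OF nc sb(1) c(1) _ sb(2) c(2) _ sb(4) c(4) _ dj(1) dj(3) dj(5)]
            no_three[OF nc sb(1) c(1) _ sb(3) c(3) _ sb(4) c(4) _ dj(2) dj(3) dj(6)]
            no_three[OF nc sb(2) c(2) _ sb(3) c(3) _ sb(4) c(4) _ dj(4) dj(5) dj(6)]
      by blast+
    have "(P2 = {} \<and> P3 = {}) \<or> (P1 = {} \<and> P4 = {})" using u t by blast
    then show ?thesis
    proof
      assume "P2 = {} \<and> P3 = {}"
      then have "S = S'" unfolding P2_def P3_def using S(1) S'(1) by blast
      then show ?thesis using S(3) S'(3) by simp
    next
      assume "P1 = {} \<and> P4 = {}"
      then have "S' = sd F S" unfolding P1_def P4_def using S(1) S'(1) by (auto simp: mem_sd)
      then have "X' = sd (d2 E bd F) (d2 E bd S)" using S'(3) d2_sd[OF _ S(1)] by simp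
      then show ?thesis using S(3) d2_F by (simp add: sd_simps)
    qed
  qed
  show ?thesis
  proof (cases "kerN N \<subseteq> {{}}")
    case True
    then have "card (kerN N) \<le> card {{}}" using card_mono[of "{{}}" "kerN N"] by simp
    then show ?thesis by simp
  next
    case False
    then obtain X0 where X0: "X0 \<in> kerN N" "X0 \<noteq> {}" by blast
    have "kerN N \<subseteq> {{}, X0}" using pair X0 by blast
    then have "card (kerN N) \<le> card {{}, X0}" using card_mono[of "{{}, X0}" "kerN N"] by simp
    also have "\<dots> \<le> 2" by (simp add: card_insert_if)
    finally show ?thesis .
  qed
qed

end

lemma sel_cover: "sel N f \<Longrightarrow> e \<in> N \<Longrightarrow> \<exists>v. f v = Some e"
  unfolding sel_def by (elim conjE) (erule bspec)

lemma sel_val: "sel N f \<Longrightarrow> f v = None \<or> (\<exists>e. f v = Some e \<and> e \<in> N \<and> v \<in> e)"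
  unfolding sel_def by (elim conjE) (erule allE)

theorem corollary3p6:
  fixes VG VT :: "'a set" and EG ET :: "'a set set"
    and F :: "'f set" and bd :: "'f \<Rightarrow> 'a set" and D :: "'a set set"
  assumes "plane_triangulation VT ET F bd"
    and "subgraph VG EG VT ET"
    and "dual_two_factor ET F bd D"
    and "num_dual_cycles F bd D \<le> 2"
  shows "robust_chromatic_number VG EG \<le> 2"
proof -
  interpret P: PT VT ET F bd by (rule PT.intro) (rule assms(1))
  have DE: "D \<subseteq> ET" and DF: "\<forall>f\<in>F. card {e\<in>D. e \<subseteq> bd f} = 2"
    using assms(3) unfolding dual_two_factor_def by auto
  have sgG: "simple_graph VG EG" and EGs: "EG \<subseteq> ET" and VGs: "VG \<subseteq> VT"
    using assms(2) unfolding subgraph_def by auto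
  have EGV: "e \<subseteq> VG" if eG: "e \<in> EG" for e
  proof -
    have "\<forall>e\<in>EG. \<exists>u v. e = {u, v} \<and> u \<noteq> v \<and> u \<in> VG \<and> v \<in> VG"
      using sgG unfolding simple_graph_def by (rule conjunct2)
    then obtain u v where "e = {u, v}" "u \<in> VG" "v \<in> VG" using eG by blast
    then show ?thesis by simp
  qed
  have "VT \<noteq> {}" using P.cardV by (metis card.empty not_numeral_le_zero)
  then obtain r where r: "r \<in> VT" by blast
  define N where "N = EG - D"
  have NE: "N \<subseteq> ET - D" unfolding N_def using EGs by blast
  have NE': "N \<subseteq> ET" using NE by blast
  have finN: "finite N" using finite_subset[OF NE' P.finE] .
  have tsN: "twosets N" using twosets_subset[OF P.ts NE'] .
  have k: "card (kerN N) \<le> 2" by (rule P.kerN_le2[OF DE assms(4) NE])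
  obtain f where f: "sel N f" using unicyclic_sel[OF finN tsN k] by blast
  define col where "col v = odd (card {x\<in>P.Pth r v. x \<in> D})" for v
  define c where "c v = (if col v then 1 else 0 :: nat)" for v
  have os: "one_selection VG EG f"
    unfolding one_selection_def
  proof
    fix v assume "v \<in> VG"
    have "f v = None \<or> (\<exists>e. f v = Some e \<and> e \<in> N \<and> v \<in> e)" by (rule sel_val[OF f])
    then show "f v = None \<or> (\<exists>e. f v = Some e \<and> e \<in> EG \<and> v \<in> e)" unfolding N_def by blast
  qed
  have rem: "e \<notin> selected_removed VG EG f" if eN: "e \<in> N" for e
  proof -
    obtain w where w: "f w = Some e" using sel_cover[OF f eN] by blast
    have "f w = None \<or> (\<exists>e'. f w = Some e' \<and> e' \<in> N \<and> w \<in> e')" by (rule sel_val[OF f])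
    then have "w \<in> e" using w by auto
    moreover have "e \<subseteq> VG" using EGV eN unfolding N_def by blast
    ultimately have "w \<in> VG" by blast
    then show ?thesis unfolding selected_removed_def using w by blast
  qed
  have colo: "colorable VG (selected_removed VG EG f) 2"
    unfolding colorable_def
  proof (intro exI[of _ c] conjI allI impI ballI)
    fix v show "c v < 2" unfolding c_def by simp
  next
    fix u v assume uv: "{u, v} \<in> selected_removed VG EG f" "u \<noteq> v"
    have inEG: "{u, v} \<in> EG" using uv(1) unfolding selected_removed_def by blast
    have "{u, v} \<notin> N" using rem uv(1) by blast
    then have inD: "{u, v} \<in> D" using inEG unfolding N_def by blast
    have inET: "{u, v} \<in> ET" using inEG EGs by blast
    have "col v = (col u \<noteq> True)"
      using P.col_edge[OF DE DF r inET] inD unfolding col_def by simp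
    then show "c u \<noteq> c v" unfolding c_def by auto
  qed
  have "chromatic_number VG (selected_removed VG EG f) \<le> 2"
    unfolding chromatic_number_def by (rule Least_le) (rule colo)
  moreover have "robust_chromatic_number VG EG \<le> chromatic_number VG (selected_removed VG EG f)"
    unfolding robust_chromatic_number_def by (rule Least_le) (use os in blast)
  ultimately show ?thesis by linarith
qed

end
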